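(* Assume $L_1\subseteq\bigcup_{\alpha\in\Sigma^\kappa}\Sigma^*\alpha\Sigma^*\bar\alpha$ and $L_2\subseteq\bigcup_{\alpha\in\Sigma^\kappa}\alpha\Sigma^*\bar\alpha\Sigma^*$. Let $M=\mathcal{I}\times\mathcal{F}$ where $\mathcal{I},\mathcal{F}$ are the initial and final states of $\mathcal{A}$; for $\mu=(I,F)\in M$ with $F=((d_1,d_2),e_1,e_2,\kappa)$ let $R_\mu$ be the set of labels of paths in $\mathcal{A}$ from $I$ to $F$ and $B_\mu=B(d_1,d_2,e_1,e_2)$. Let $\sigma=\max_{\mu\in M}\lambda_{B_\mu}$, $\rho=\max_{\mu\in M}\lambda_{R_\mu}$, and $\eta=\lambda_{\mathcal{H}_\kappa(L_1,L_2)}$. Then $\eta=\max\{\sigma,\sqrt\rho\}$.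
   Context: $\Sigma$ is a finite alphabet with at least two letters with an involution $a\mapsto\bar a$ ($\bar{\bar a}=a$), extended to words by $\overline{a_1\cdots a_m}=\bar a_m\cdots\bar a_1$ and to languages elementwise. $\kappa$ is a fixed positive integer. $\mathcal{H}_\kappa(L_1,L_2)=\{\gamma\alpha\beta\bar\alpha\bar\gamma:|\alpha|\ge\kappa,\ \gamma\alpha\beta\bar\alpha\in L_1\text{ or }\alpha\beta\bar\alpha\bar\gamma\in L_2\}$. $L_1,L_2$ are regular; $\mathcal{A}_1=(Q_1,\Sigma,E_1,\{q_{01}\},F_1)$ is a complete DFA accepting $L_1$, $\mathcal{A}_2=(Q_2,\Sigma,E_2,\{q_{02}\},F_2)$ a complete DFA accepting $\overline{L_2}$; $p\cdot w$ is the state reached from $p$ on $w$. Growth indicator: $\lambda_L=\inf\{\lambda\ge0:\exists c>0\ \forall m: |L\cap\Sigma^m|\le c\lambda^m\}$. Construction of $\mathcal{A}$: $Q_{12}=\{(q_{01}\cdot w,q_{02}\cdot w):w\in\Sigma^*\}$ with $(p_1,p_2)\cdot w=(p_1\cdot w,p_2\cdot w)$. For $(p_1,p_2,q_1,q_2)\in Q_1\times Q_2\times Q_1\times Q_2$ let $B(p_1,p_2,q_1,q_2)=\{w:p_1\cdot w=q_1,\ p_2\cdot\bar w=q_2\}$; the quadruple is a basic bridge if this set is nonempty. States of $\mathcal{A}$ are all $((p_1,p_2),q_1,q_2,\ell)$ with $(p_1,p_2)\in Q_{12}$, $q_i\in Q_i$, $\ell\in\{0,\dots,\kappa\}$, $(p_1,p_2,q_1,q_2)$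 a basic bridge. For $a\in\Sigma$, $P\in Q_{12}$, $q_i\in Q_i$, there is an $a$-arc from $(P,q_1\cdot\bar a,q_2\cdot\bar a,\ell)$ to $(P\cdot a,q_1,q_2,\ell')$, provided both are states, exactly when: $\ell=\ell'=0$ and $q_1\cdot\bar a\notin F_1$, $q_2\cdot\bar a\notin F_2$; or $\ell=0,\ell'=1$ and ($q_1\cdot\bar a\in F_1$ or $q_2\cdot\bar a\in F_2$); or $1\le\ell<\kappa$ and $\ell'=\ell+1$. Initial states: $((q_{01},q_{02}),q_1',q_2',0)$; final states: those with $\ell=\kappa$. $\mathcal{A}$ is trimmed: states not reachable from an initial state, or from which no final state is reachable, are removed. *)

theory Defs
  imports Complex_Main
begin

definition wbar :: "('a \<Rightarrow> 'a) \<Rightarrow> 'a list \<Rightarrow> 'a list" where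
  "wbar iv w = rev (map iv w)"

definition run :: "('s \<Rightarrow> 'a \<Rightarrow> 's) \<Rightarrow> 's \<Rightarrow> 'a list \<Rightarrow> 's" where
  "run \<delta> q w = foldl \<delta> q w"

definition dfa_lang :: "('s \<Rightarrow> 'a \<Rightarrow> 's) \<Rightarrow> 's \<Rightarrow> 's set \<Rightarrow> 'a list set" where
  "dfa_lang \<delta> q0 F = {w. run \<delta> q0 w \<in> F}"

definition growth :: "'a list set \<Rightarrow> real" where
  "growth L = Inf {l::real. l \<ge> 0 \<and>
      (\<exists>c>0. \<forall>m. real (card {w \<in> L. length w = m}) \<le> c * l ^ m)}"

definition hairpin :: "('a \<Rightarrow> 'a) \<Rightarrow> nat \<Rightarrow> 'a list set \<Rightarrow> 'a list set \<Rightarrow> 'a list set" where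
  "hairpin iv \<kappa> L1 L2 = {\<gamma> @ \<alpha> @ \<beta> @ wbar iv \<alpha> @ wbar iv \<gamma> | \<gamma> \<alpha> \<beta>.
      length \<alpha> \<ge> \<kappa> \<and>
      (\<gamma> @ \<alpha> @ \<beta> @ wbar iv \<alpha> \<in> L1 \<or> \<alpha> @ \<beta> @ wbar iv \<alpha> @ wbar iv \<gamma> \<in> L2)}"

definition Q12 :: "('s1 \<Rightarrow> 'a \<Rightarrow> 's1) \<Rightarrow> 's1 \<Rightarrow> ('s2 \<Rightarrow> 'a \<Rightarrow> 's2) \<Rightarrow> 's2 \<Rightarrow> ('s1 \<times> 's2) set" where
  "Q12 \<delta>1 q01 \<delta>2 q02 = {(run \<delta>1 q01 w, run \<delta>2 q02 w) | w. True}"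

definition Bset :: "('a \<Rightarrow> 'a) \<Rightarrow> ('s1 \<Rightarrow> 'a \<Rightarrow> 's1) \<Rightarrow> ('s2 \<Rightarrow> 'a \<Rightarrow> 's2)
    \<Rightarrow> 's1 \<Rightarrow> 's2 \<Rightarrow> 's1 \<Rightarrow> 's2 \<Rightarrow> 'a list set" where
  "Bset iv \<delta>1 \<delta>2 p1 p2 q1 q2 = {w. run \<delta>1 p1 w = q1 \<and> run \<delta>2 p2 (wbar iv w) = q2}"

type_synonym ('s1, 's2) hstate = "('s1 \<times> 's2) \<times> 's1 \<times> 's2 \<times> nat"

definition is_state :: "('a \<Rightarrow> 'a) \<Rightarrow> nat \<Rightarrow> ('s1 \<Rightarrow> 'a \<Rightarrow> 's1) \<Rightarrow> 's1
    \<Rightarrow> ('s2 \<Rightarrow> 'a \<Rightarrow> 's2) \<Rightarrow> 's2 \<Rightarrow> ('s1, 's2) hstate \<Rightarrow> bool" where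
  "is_state iv \<kappa> \<delta>1 q01 \<delta>2 q02 s = (case s of ((p1, p2), q1, q2, l) \<Rightarrow>
      (p1, p2) \<in> Q12 \<delta>1 q01 \<delta>2 q02 \<and> l \<le> \<kappa> \<and> Bset iv \<delta>1 \<delta>2 p1 p2 q1 q2 \<noteq> {})"

definition arc :: "('a \<Rightarrow> 'a) \<Rightarrow> nat \<Rightarrow> ('s1 \<Rightarrow> 'a \<Rightarrow> 's1) \<Rightarrow> 's1 \<Rightarrow> 's1 set
    \<Rightarrow> ('s2 \<Rightarrow> 'a \<Rightarrow> 's2) \<Rightarrow> 's2 \<Rightarrow> 's2 set
    \<Rightarrow> ('s1, 's2) hstate \<Rightarrow> 'a \<Rightarrow> ('s1, 's2) hstate \<Rightarrow> bool" where
  "arc iv \<kappa> \<delta>1 q01 F1 \<delta>2 q02 F2 s a t =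
     (\<exists>p1 p2 q1 q2 l l'.
        s = ((p1, p2), \<delta>1 q1 (iv a), \<delta>2 q2 (iv a), l) \<and>
        t = ((\<delta>1 p1 a, \<delta>2 p2 a), q1, q2, l') \<and>
        is_state iv \<kappa> \<delta>1 q01 \<delta>2 q02 s \<and> is_state iv \<kappa> \<delta>1 q01 \<delta>2 q02 t \<and>
        ((l = 0 \<and> l' = 0 \<and> \<delta>1 q1 (iv a) \<notin> F1 \<and> \<delta>2 q2 (iv a) \<notin> F2) \<or>
         (l = 0 \<and> l' = 1 \<and> (\<delta>1 q1 (iv a) \<in> F1 \<or> \<delta>2 q2 (iv a) \<in> F2)) \<or>
         (1 \<le> l \<and> l < \<kappa> \<and> l' = l + 1)))"

fun apath :: "(('s1, 's2) hstate \<Rightarrow> 'a \<Rightarrow> ('s1, 's2) hstate \<Rightarrow> bool)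
    \<Rightarrow> ('s1, 's2) hstate \<Rightarrow> 'a list \<Rightarrow> ('s1, 's2) hstate \<Rightarrow> bool" where
  "apath E s [] t = (s = t)"
| "apath E s (a # w) t = (\<exists>u. E s a u \<and> apath E u w t)"

definition init_state :: "('a \<Rightarrow> 'a) \<Rightarrow> nat \<Rightarrow> ('s1 \<Rightarrow> 'a \<Rightarrow> 's1) \<Rightarrow> 's1
    \<Rightarrow> ('s2 \<Rightarrow> 'a \<Rightarrow> 's2) \<Rightarrow> 's2 \<Rightarrow> ('s1, 's2) hstate \<Rightarrow> bool" where
  "init_state iv \<kappa> \<delta>1 q01 \<delta>2 q02 s =
     (is_state iv \<kappa> \<delta>1 q01 \<delta>2 q02 s \<and> fst s = (q01, q02) \<and> snd (snd (snd s)) = 0)"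

definition final_state :: "('a \<Rightarrow> 'a) \<Rightarrow> nat \<Rightarrow> ('s1 \<Rightarrow> 'a \<Rightarrow> 's1) \<Rightarrow> 's1
    \<Rightarrow> ('s2 \<Rightarrow> 'a \<Rightarrow> 's2) \<Rightarrow> 's2 \<Rightarrow> ('s1, 's2) hstate \<Rightarrow> bool" where
  "final_state iv \<kappa> \<delta>1 q01 \<delta>2 q02 s =
     (is_state iv \<kappa> \<delta>1 q01 \<delta>2 q02 s \<and> snd (snd (snd s)) = \<kappa>)"

text \<open>M = (initial states of trimmed \<A>) \<times> (final states of trimmed \<A>).
  An initial state survives trimming iff some final state is reachable from it;
  a final state survives iff it is reachable from some initial state.\<close>
definition Mset :: "('a \<Rightarrow> 'a) \<Rightarrow> nat \<Rightarrow> ('s1 \<Rightarrow> 'a \<Rightarrow> 's1) \<Rightarrow> 's1 \<Rightarrow> 's1 set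
    \<Rightarrow> ('s2 \<Rightarrow> 'a \<Rightarrow> 's2) \<Rightarrow> 's2 \<Rightarrow> 's2 set
    \<Rightarrow> (('s1, 's2) hstate \<times> ('s1, 's2) hstate) set" where
  "Mset iv \<kappa> \<delta>1 q01 F1 \<delta>2 q02 F2 =
     {(I, F). init_state iv \<kappa> \<delta>1 q01 \<delta>2 q02 I \<and> final_state iv \<kappa> \<delta>1 q01 \<delta>2 q02 F \<and>
        (\<exists>F' w. final_state iv \<kappa> \<delta>1 q01 \<delta>2 q02 F' \<and> apath (arc iv \<kappa> \<delta>1 q01 F1 \<delta>2 q02 F2) I w F') \<and>
        (\<exists>I' w. init_state iv \<kappa> \<delta>1 q01 \<delta>2 q02 I' \<and> apath (arc iv \<kappa> \<delta>1 q01 F1 \<delta>2 q02 F2) I' w F)}"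

text \<open>R_\<mu>: labels of paths from I to F (in the trimmed automaton; since I and F survive
  trimming, every intermediate state of such a path does too).\<close>
definition Rset :: "('a \<Rightarrow> 'a) \<Rightarrow> nat \<Rightarrow> ('s1 \<Rightarrow> 'a \<Rightarrow> 's1) \<Rightarrow> 's1 \<Rightarrow> 's1 set
    \<Rightarrow> ('s2 \<Rightarrow> 'a \<Rightarrow> 's2) \<Rightarrow> 's2 \<Rightarrow> 's2 set
    \<Rightarrow> ('s1, 's2) hstate \<times> ('s1, 's2) hstate \<Rightarrow> 'a list set" where
  "Rset iv \<kappa> \<delta>1 q01 F1 \<delta>2 q02 F2 \<mu> = {w. apath (arc iv \<kappa> \<delta>1 q01 F1 \<delta>2 q02 F2) (fst \<mu>) w (snd \<mu>)}"

definition Bmu :: "('a \<Rightarrow> 'a) \<Rightarrow> ('s1 \<Rightarrow> 'a \<Rightarrow> 's1) \<Rightarrow> ('s2 \<Rightarrow> 'a \<Rightarrow> 's2)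
    \<Rightarrow> ('s1, 's2) hstate \<times> ('s1, 's2) hstate \<Rightarrow> 'a list set" where
  "Bmu iv \<delta>1 \<delta>2 \<mu> = (case snd \<mu> of ((d1, d2), e1, e2, _) \<Rightarrow> Bset iv \<delta>1 \<delta>2 d1 d2 e1 e2)"

end

theory Submission
  imports Defs
begin


definition GS :: "'a list set \<Rightarrow> real set" where
  "GS L = {l::real. l \<ge> 0 \<and> (\<exists>c>0. \<forall>m. real (card {w \<in> L. length w = m}) \<le> c * l ^ m)}"

lemma growth_GS: "growth L = Inf (GS L)"
  unfolding growth_def GS_def by simp

lemma fin_len: "finite {w \<in> (L::'a::finite list set). length w = m}"
proof -
  have "finite {xs::'a list. length xs = m}"
    using finite_lists_length_eq[of "UNIV::'a set" m] by simp
  then show ?thesis by (rule finite_subset[rotated]) auto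
qed

lemma card_len_le: "card {w \<in> (L::'a::finite list set). length w = m} \<le> card (UNIV::'a set) ^ m"
proof -
  have "card {w \<in> L. length w = m} \<le> card {xs::'a list. set xs \<subseteq> UNIV \<and> length xs = m}"
    by (rule card_mono) (use finite_lists_length_eq[of "UNIV::'a set" m] in auto)
  also have "\<dots> = card (UNIV::'a set) ^ m" by (rule card_lists_length_eq) simp
  finally show ?thesis .
qed

lemma GS_ne: "real (card (UNIV::'a set)) \<in> GS (L::'a::finite list set)"
proof -
  have "real (card {w \<in> L. length w = m}) \<le> 1 * real (card (UNIV::'a set)) ^ m" for m
    using card_len_le[of L m] by (metis mult_1 of_nat_le_iff of_nat_power)
  then show ?thesis unfolding GS_def by (auto intro!: exI[of _ 1])
qed

lemma GS_bdd: "bdd_below (GS L)"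
  unfolding GS_def by (rule bdd_belowI[of _ 0]) auto

lemma growth_ge0: "0 \<le> growth (L::'a::finite list set)"
proof -
  have ne: "GS L \<noteq> {}" using GS_ne[of L] by blast
  show ?thesis unfolding growth_GS by (rule cInf_greatest[OF ne]) (simp add: GS_def)
qed

lemma growth_le:
  assumes "\<And>l. l > x \<Longrightarrow> l \<in> GS (L::'a::finite list set)"
  shows "growth L \<le> x"
proof (rule dense_ge)
  fix l assume "x < l"
  then have "l \<in> GS L" by (rule assms)
  then show "growth L \<le> l" unfolding growth_GS by (rule cInf_lower[OF _ GS_bdd])
qed

lemma in_GS:
  assumes "l > growth (L::'a::finite list set)"
  shows "l \<in> GS L"
proof -
  have "Inf (GS L) < l" using assms growth_GS by metis
  then obtain l' where l': "l' \<in> GS L" "l' < l"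
    using cInf_lessD[of "GS L" l] GS_ne[of L] by blast
  then obtain c where c: "c > 0" "\<And>m. real (card {w \<in> L. length w = m}) \<le> c * l' ^ m" "l' \<ge> 0"
    unfolding GS_def by auto
  have "real (card {w \<in> L. length w = m}) \<le> c * l ^ m" for m
  proof -
    have "c * l' ^ m \<le> c * l ^ m" using c l' by (intro mult_left_mono power_mono) auto
    then show ?thesis using c(2)[of m] by linarith
  qed
  then show ?thesis unfolding GS_def using c l' by auto
qed

lemma growth_mono:
  assumes "L \<subseteq> (L'::'a::finite list set)"
  shows "growth L \<le> growth L'"
proof (rule growth_le)
  fix l assume "l > growth L'"
  then have "l \<in> GS L'" by (rule in_GS)
  then obtain c where c: "l \<ge> 0" "c > 0" "\<And>m. real (card {w \<in> L'. length w = m}) \<le> c * l ^ m"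
    unfolding GS_def by auto
  have "real (card {w \<in> L. length w = m}) \<le> c * l ^ m" for m
  proof -
    have "card {w \<in> L. length w = m} \<le> card {w \<in> L'. length w = m}"
      by (rule card_mono[OF fin_len]) (use assms in auto)
    then show ?thesis using c(3)[of m] by linarith
  qed
  then show "l \<in> GS L" unfolding GS_def using c by auto
qed

lemma growth_UN:
  assumes fin: "finite I" and x: "0 \<le> x" and le: "\<And>i. i \<in> I \<Longrightarrow> growth (L i) \<le> x"
  shows "growth (\<Union>i\<in>I. (L i :: 'a::finite list set)) \<le> x"
proof (rule growth_le)
  fix l assume "l > x"
  then have "\<forall>i\<in>I. l \<in> GS (L i)" using le by (meson in_GS le_less_trans)
  then have "\<forall>i\<in>I. \<exists>c>0. \<forall>m. real (card {w \<in> L i. length w = m}) \<le> c * l ^ m"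
    unfolding GS_def by auto
  from bchoice[OF this] obtain c where c0: "\<forall>i\<in>I. c i > 0 \<and> (\<forall>m. real (card {w \<in> L i. length w = m}) \<le> c i * l ^ m)"
    by blast
  then have c: "\<And>i. i \<in> I \<Longrightarrow> c i > 0 \<and> (\<forall>m. real (card {w \<in> L i. length w = m}) \<le> c i * l ^ m)"
    by blast
  have l0: "l \<ge> 0" using \<open>l > x\<close> x by simp
  have "real (card {w \<in> (\<Union>i\<in>I. L i). length w = m}) \<le> (1 + sum c I) * l ^ m" for m
  proof -
    have "{w \<in> (\<Union>i\<in>I. L i). length w = m} = (\<Union>i\<in>I. {w \<in> L i. length w = m})" by blast
    then have "card {w \<in> (\<Union>i\<in>I. L i). length w = m} \<le> (\<Sum>i\<in>I. card {w \<in> L i. length w = m})"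
      using card_UN_le[OF fin, of "\<lambda>i. {w \<in> L i. length w = m}"] by simp
    then have "real (card {w \<in> (\<Union>i\<in>I. L i). length w = m}) \<le> (\<Sum>i\<in>I. real (card {w \<in> L i. length w = m}))"
      by (simp only: of_nat_sum[symmetric] of_nat_le_iff)
    also have "\<dots> \<le> (\<Sum>i\<in>I. c i * l ^ m)" by (rule sum_mono) (use c in blast)
    also have "\<dots> = sum c I * l ^ m" by (simp add: sum_distrib_right)
    also have "\<dots> \<le> (1 + sum c I) * l ^ m" using l0 by (simp add: distrib_right zero_le_power)
    finally show ?thesis .
  qed
  moreover have "sum c I \<ge> 0" by (rule sum_nonneg) (use c in fastforce)
  then have "1 + sum c I > 0" by simp
  ultimately show "l \<in> GS (\<Union>i\<in>I. L i)" unfolding GS_def using l0 by blast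
qed

lemma poly_geo_bound:
  fixes r :: real
  assumes "0 \<le> r" "r < 1"
  shows "\<exists>K>0. \<forall>n. real (n+1) * r ^ n \<le> K"
proof -
  have "(\<lambda>n. of_nat n * r ^ n) \<longlonglongrightarrow> 0" using assms by (intro powser_times_n_limit_0) simp
  then have "Bseq (\<lambda>n. of_nat n * r ^ n)" by (rule convergent_imp_Bseq[OF convergentI])
  then obtain K where K: "K > 0" "\<And>n. norm (of_nat n * r ^ n) \<le> K" by (auto simp: Bseq_def)
  have "real (n+1) * r ^ n \<le> K + 1" for n
  proof -
    have "r ^ n \<le> 1" using assms by (simp add: power_le_one)
    moreover have "of_nat n * r ^ n \<le> K" using K(2)[of n] assms by simp
    ultimately show ?thesis by (simp add: distrib_right)
  qed
  then show ?thesis using K by (intro exI[of _ "K+1"]) auto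
qed

definition Cat :: "('a \<Rightarrow> 'a) \<Rightarrow> 'a list set \<Rightarrow> 'a list set \<Rightarrow> 'a list set" where
  "Cat iv A B = {u @ w @ wbar iv u | u w. u \<in> A \<and> w \<in> B}"

lemma length_wbar[simp]: "length (wbar iv x) = length x"
  by (simp add: wbar_def)

lemma growth_Cat_le:
  "growth (Cat iv A B) \<le> max (growth (B::'a::finite list set)) (sqrt (growth (A::'a list set)))"
proof (rule growth_le)
  fix l assume l: "l > max (growth B) (sqrt (growth A))"
  define mx where "mx = max (growth B) (sqrt (growth A))"
  have mx0: "mx \<ge> 0" unfolding mx_def using growth_ge0[of B] by simp
  define l' where "l' = (mx + l) / 2"
  have ll: "mx < l'" "l' < l" "0 < l'" "0 < l" using l mx0 unfolding l'_def mx_def[symmetric] by auto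
  have "l' > growth B" using ll(1) unfolding mx_def by simp
  then have "l' \<in> GS B" by (rule in_GS)
  then obtain cB where cB: "cB > 0" "\<And>m. real (card {w \<in> B. length w = m}) \<le> cB * l' ^ m"
    unfolding GS_def by auto
  have sA: "sqrt (growth A) < l'" using ll(1) unfolding mx_def by simp
  have "growth A = (sqrt (growth A))^2" using growth_ge0[of A] by simp
  also have "\<dots> < l'^2" using sA growth_ge0[of A] by (intro power_strict_mono) auto
  finally have "l'^2 \<in> GS A" by (rule in_GS)
  then obtain cA where cA: "cA > 0" "\<And>m. real (card {w \<in> A. length w = m}) \<le> cA * (l'^2) ^ m"
    unfolding GS_def by auto
  obtain K where K: "K > 0" "\<And>n. real (n+1) * (l'/l) ^ n \<le> K"
    using poly_geo_bound[of "l'/l"] ll by auto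
  have "real (card {x \<in> Cat iv A B. length x = n}) \<le> (cA * cB * K) * l ^ n" for n
  proof -
    define f where "f = (\<lambda>(u, w). u @ w @ wbar iv (u::'a list))"
    define KK where "KK = {k. 2 * k \<le> n}"
    have finKK: "finite KK" unfolding KK_def by (rule finite_subset[of _ "{..n}"]) auto
    have cardKK: "card KK \<le> n + 1"
    proof -
      have "KK \<subseteq> {..n}" unfolding KK_def by auto
      then have "card KK \<le> card {..n}" by (rule card_mono[rotated]) simp
      then show ?thesis by simp
    qed
    have sub: "{x \<in> Cat iv A B. length x = n} \<subseteq>
        (\<Union>k\<in>KK. f ` ({u \<in> A. length u = k} \<times> {w \<in> B. length w = n - 2 * k}))"
    proof
      fix x assume "x \<in> {x \<in> Cat iv A B. length x = n}"
      then obtain u w where uw: "u \<in> A" "w \<in> B" "x = u @ w @ wbar iv u" "length x = n"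
        unfolding Cat_def by auto
      then have uK: "length u \<in> KK" and uL: "length w = n - 2 * length u" unfolding KK_def by auto
      show "x \<in> (\<Union>k\<in>KK. f ` ({u \<in> A. length u = k} \<times> {w \<in> B. length w = n - 2 * k}))"
      proof (rule UN_I[of "length u"])
        show "length u \<in> KK" by (rule uK)
        have "(u, w) \<in> {u' \<in> A. length u' = length u} \<times> {w \<in> B. length w = n - 2 * length u}"
          using uw uL by simp
        moreover have "x = f (u, w)" using uw unfolding f_def by simp
        ultimately show "x \<in> f ` ({u' \<in> A. length u' = length u} \<times> {w \<in> B. length w = n - 2 * length u})"
          by (rule rev_image_eqI)
      qed
    qed
    have "card {x \<in> Cat iv A B. length x = n} \<le>
        card (\<Union>k\<in>KK. f ` ({u \<in> A. length u = k} \<times> {w \<in> B. length w = n - 2 * k}))"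
      by (rule card_mono[OF _ sub]) (intro finite_UN_I finKK finite_imageI finite_cartesian_product fin_len)
    also have "\<dots> \<le> (\<Sum>k\<in>KK. card (f ` ({u \<in> A. length u = k} \<times> {w \<in> B. length w = n - 2 * k})))"
      by (rule card_UN_le[OF finKK])
    also have "\<dots> \<le> (\<Sum>k\<in>KK. card {u \<in> A. length u = k} * card {w \<in> B. length w = n - 2 * k})"
    proof (rule sum_mono)
      fix k
      show "card (f ` ({u \<in> A. length u = k} \<times> {w \<in> B. length w = n - 2 * k}))
          \<le> card {u \<in> A. length u = k} * card {w \<in> B. length w = n - 2 * k}"
        using card_image_le[OF finite_cartesian_product[OF fin_len fin_len], of f A k B "n - 2 * k"]
        by (simp only: card_cartesian_product)
    qed
    finally have c1: "real (card {x \<in> Cat iv A B. length x = n}) \<le>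
        (\<Sum>k\<in>KK. real (card {u \<in> A. length u = k}) * real (card {w \<in> B. length w = n - 2 * k}))"
      by (simp only: of_nat_sum[symmetric] of_nat_mult[symmetric] of_nat_le_iff)
    also have "\<dots> \<le> (\<Sum>k\<in>KK. cA * cB * l' ^ n)"
    proof (rule sum_mono)
      fix k assume k: "k \<in> KK"
      have "real (card {u \<in> A. length u = k}) * real (card {w \<in> B. length w = n - 2 * k})
          \<le> (cA * (l'^2) ^ k) * (cB * l' ^ (n - 2 * k))"
        using cA cB ll by (intro mult_mono) auto
      also have "\<dots> = cA * cB * (l' ^ (2 * k) * l' ^ (n - 2 * k))"
        by (simp add: power_mult)
      also have "l' ^ (2 * k) * l' ^ (n - 2 * k) = l' ^ n"
        using k unfolding KK_def by (simp add: power_add[symmetric])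
      finally show "real (card {u \<in> A. length u = k}) * real (card {w \<in> B. length w = n - 2 * k})
          \<le> cA * cB * l' ^ n" .
    qed
    also have "\<dots> = real (card KK) * (cA * cB * l' ^ n)" by simp
    also have "\<dots> \<le> real (n + 1) * (cA * cB * l' ^ n)"
      using cardKK cA cB ll by (intro mult_right_mono) auto
    also have "\<dots> = cA * cB * (real (n+1) * (l'/l) ^ n) * l ^ n"
      using ll by (simp add: power_divide field_simps)
    also have "\<dots> \<le> cA * cB * K * l ^ n"
      using K(2)[of n] cA cB ll by (intro mult_right_mono mult_left_mono) auto
    finally show ?thesis .
  qed
  moreover have "cA * cB * K > 0" using cA cB K by simp
  ultimately show "l \<in> GS (Cat iv A B)" unfolding GS_def using ll by (auto intro!: exI[of _ "cA * cB * K"])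
qed

lemma growth_Cat_B:
  assumes u0: "u0 \<in> A"
  shows "growth (B::'a::finite list set) \<le> growth (Cat iv A B)"
proof (rule growth_le)
  fix l assume l: "l > growth (Cat iv A B)"
  then have l0: "l > 0" using growth_ge0[of "Cat iv A B"] by simp
  from in_GS[OF l] obtain c where c: "c > 0" "\<And>m. real (card {w \<in> Cat iv A B. length w = m}) \<le> c * l ^ m"
    unfolding GS_def by auto
  have "real (card {w \<in> B. length w = m}) \<le> (c * l ^ (2 * length u0)) * l ^ m" for m
  proof -
    have "card {w \<in> B. length w = m} \<le> card {w \<in> Cat iv A B. length w = m + 2 * length u0}"
    proof (rule card_inj_on_le[of "\<lambda>w. u0 @ w @ wbar iv u0"])
      show "inj_on (\<lambda>w. u0 @ w @ wbar iv u0) {w \<in> B. length w = m}" by (rule inj_onI) simp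
      show "(\<lambda>w. u0 @ w @ wbar iv u0) ` {w \<in> B. length w = m} \<subseteq> {w \<in> Cat iv A B. length w = m + 2 * length u0}"
        using u0 unfolding Cat_def by auto
    qed (rule fin_len)
    then have "real (card {w \<in> B. length w = m}) \<le> c * l ^ (m + 2 * length u0)"
      using c(2)[of "m + 2 * length u0"] by linarith
    also have "\<dots> = (c * l ^ (2 * length u0)) * l ^ m" by (simp add: power_add)
    finally show ?thesis .
  qed
  moreover have "c * l ^ (2 * length u0) > 0" using c l0 by simp
  ultimately show "l \<in> GS B" unfolding GS_def using l0 by (auto intro!: exI[of _ "c * l ^ (2 * length u0)"])
qed

lemma growth_Cat_A:
  assumes w0: "w0 \<in> B"
  shows "sqrt (growth (A::'a::finite list set)) \<le> growth (Cat iv A B)"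
proof -
  let ?g = "growth (Cat iv A B)"
  have g0: "?g \<ge> 0" by (rule growth_ge0)
  have "growth A \<le> ?g ^ 2"
  proof (rule growth_le)
    fix y assume y: "y > ?g ^ 2"
    define l where "l = sqrt y"
    have y0: "y > 0" using y g0 by (smt (verit) zero_le_power2)
    have "?g = sqrt (?g ^ 2)" using g0 by simp
    also have "\<dots> < l" unfolding l_def using y by (rule real_sqrt_less_mono)
    finally have l: "l > ?g" .
    then have l0: "l > 0" using g0 by simp
    have ly: "l ^ 2 = y" unfolding l_def using y0 by simp
    from in_GS[OF l] obtain c where c: "c > 0" "\<And>m. real (card {w \<in> Cat iv A B. length w = m}) \<le> c * l ^ m"
      unfolding GS_def by auto
    have "real (card {w \<in> A. length w = k}) \<le> (c * l ^ length w0) * y ^ k" for k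
    proof -
      have "card {w \<in> A. length w = k} \<le> card {w \<in> Cat iv A B. length w = 2 * k + length w0}"
      proof (rule card_inj_on_le[of "\<lambda>u. u @ w0 @ wbar iv u"])
        show "inj_on (\<lambda>u. u @ w0 @ wbar iv u) {w \<in> A. length w = k}"
          by (rule inj_onI) (auto simp: append_eq_append_conv)
        show "(\<lambda>u. u @ w0 @ wbar iv u) ` {w \<in> A. length w = k} \<subseteq> {w \<in> Cat iv A B. length w = 2 * k + length w0}"
          using w0 unfolding Cat_def by auto
      qed (rule fin_len)
      then have "real (card {w \<in> A. length w = k}) \<le> c * l ^ (2 * k + length w0)"
        using c(2)[of "2 * k + length w0"] by linarith
      also have "\<dots> = (c * l ^ length w0) * (l ^ 2) ^ k" by (simp add: power_add power_mult)
      finally show ?thesis using ly by simp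
    qed
    moreover have "c * l ^ length w0 > 0" using c l0 by simp
    ultimately show "y \<in> GS A" unfolding GS_def using y0 by (auto intro!: exI[of _ "c * l ^ length w0"])
  qed
  then have "sqrt (growth A) \<le> sqrt (?g ^ 2)" by (rule real_sqrt_le_mono)
  then show ?thesis using g0 by simp
qed



lemma wbar_Nil[simp]: "wbar iv [] = []" by (simp add: wbar_def)
lemma wbar_append[simp]: "wbar iv (x @ y) = wbar iv y @ wbar iv x" by (simp add: wbar_def)
lemma wbar_Cons[simp]: "wbar iv (a # x) = wbar iv x @ [iv a]" by (simp add: wbar_def)
lemma wbar_wbar: "(\<And>a. iv (iv a) = a) \<Longrightarrow> wbar iv (wbar iv x) = x"
  by (simp add: wbar_def rev_map comp_def)

lemma run_Nil[simp]: "run d q [] = q" by (simp add: run_def)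
lemma run_Cons[simp]: "run d q (a # x) = run d (d q a) x" by (simp add: run_def)
lemma run_append[simp]: "run d q (x @ y) = run d (run d q x) y" by (simp add: run_def)

lemma take_drop_app[simp]: "take j u @ drop j u @ X = u @ X"
  by (metis append_assoc append_take_drop_id)

definition lev :: "('s1, 's2) hstate \<Rightarrow> nat" where "lev s = snd (snd (snd s))"

lemma apath_append: "apath E s (x @ y) t \<longleftrightarrow> (\<exists>u. apath E s x u \<and> apath E u y t)"
  by (induction x arbitrary: s) (simp_all del: split_paired_Ex, blast)

lemma path_build:
  "(\<And>j. j < length u \<Longrightarrow> E (S j) (u ! j) (S (Suc j))) \<Longrightarrow> apath E (S 0) u (S (length u))"
proof (induction u arbitrary: S)
  case Nil then show ?case by simp
next
  case (Cons a u)
  have "apath E ((S \<circ> Suc) 0) u ((S \<circ> Suc) (length u))"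
    by (rule Cons.IH) (use Cons.prems in force)
  moreover have "E (S 0) a (S (Suc 0))" using Cons.prems[of 0] by simp
  ultimately show ?case by (simp del: split_paired_Ex) blast
qed

locale hp =
  fixes iv :: "'a::finite \<Rightarrow> 'a" and \<kappa> :: nat
    and \<delta>1 :: "'s1::finite \<Rightarrow> 'a \<Rightarrow> 's1" and q01 :: 's1 and F1 :: "'s1 set"
    and \<delta>2 :: "'s2::finite \<Rightarrow> 'a \<Rightarrow> 's2" and q02 :: 's2 and F2 :: "'s2 set"
    and L1 L2 :: "'a list set"
  assumes invol: "\<And>a. iv (iv a) = a"
    and kpos: "\<kappa> > 0"
    and L1_def: "L1 = dfa_lang \<delta>1 q01 F1"
    and L2_def: "wbar iv ` L2 = dfa_lang \<delta>2 q02 F2"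
begin

abbreviation "E \<equiv> arc iv \<kappa> \<delta>1 q01 F1 \<delta>2 q02 F2"
abbreviation "St \<equiv> is_state iv \<kappa> \<delta>1 q01 \<delta>2 q02"

lemma ww[simp]: "wbar iv (wbar iv x) = x" by (rule wbar_wbar[OF invol])

lemma path_sem:
  "apath E s x t \<Longrightarrow> s = ((p1, p2), r1, r2, l) \<Longrightarrow> t = ((d1, d2), e1, e2, l') \<Longrightarrow>
    run \<delta>1 p1 x = d1 \<and> run \<delta>2 p2 x = d2 \<and> r1 = run \<delta>1 e1 (wbar iv x) \<and> r2 = run \<delta>2 e2 (wbar iv x)"
proof (induction x arbitrary: s p1 p2 r1 r2 l)
  case Nil then show ?case by simp
next
  case (Cons a x)
  then obtain u where su: "E s a u" "apath E u x t" by auto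
  from su(1) obtain P1 P2 q1 q2 l0 l0' where
    s: "s = ((P1, P2), \<delta>1 q1 (iv a), \<delta>2 q2 (iv a), l0)" and
    u: "u = ((\<delta>1 P1 a, \<delta>2 P2 a), q1, q2, l0')"
    unfolding arc_def by blast
  have IH: "run \<delta>1 (\<delta>1 P1 a) x = d1 \<and> run \<delta>2 (\<delta>2 P2 a) x = d2 \<and> q1 = run \<delta>1 e1 (wbar iv x) \<and> q2 = run \<delta>2 e2 (wbar iv x)"
    by (rule Cons.IH[OF su(2) u Cons.prems(3)])
  show ?case using IH s Cons.prems(2) by simp
qed

lemma arc_lev:
  "E s a t \<Longrightarrow> (lev s = 0 \<and> lev t = 0) \<or>
     (lev s = 0 \<and> lev t = 1 \<and> (fst (snd s) \<in> F1 \<or> fst (snd (snd s)) \<in> F2)) \<or>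
     (1 \<le> lev s \<and> lev s < \<kappa> \<and> lev t = lev s + 1)"
  unfolding arc_def lev_def by auto

lemma path_lev_pos: "apath E s x t \<Longrightarrow> lev s \<ge> 1 \<Longrightarrow> lev t = lev s + length x"
proof (induction x arbitrary: s)
  case Nil then show ?case by simp
next
  case (Cons a x)
  then obtain u where su: "E s a u" "apath E u x t" by auto
  have "lev u = lev s + 1" using arc_lev[OF su(1)] Cons.prems by auto
  then show ?case using Cons.IH[OF su(2)] by simp
qed

lemma path_split:
  "apath E s x t \<Longrightarrow> lev s = 0 \<Longrightarrow> lev t \<noteq> 0 \<Longrightarrow>
   \<exists>x0 a v s' u. x = x0 @ a # v \<and> apath E s x0 s' \<and> lev s' = 0 \<and> E s' a u \<and> lev u = 1 \<and> apath E u v t"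
proof (induction x arbitrary: s)
  case Nil then show ?case by simp
next
  case (Cons a x)
  then obtain u where su: "E s a u" "apath E u x t" by auto
  show ?case
  proof (cases "lev u = 0")
    case True
    from Cons.IH[OF su(2) True Cons.prems(3)] obtain x0 b v s' u' where
      h: "x = x0 @ b # v" "apath E u x0 s'" "lev s' = 0" "E s' b u'" "lev u' = 1" "apath E u' v t" by blast
    show ?thesis
      by (rule exI[of _ "a # x0"], rule exI[of _ b], rule exI[of _ v], rule exI[of _ s'], rule exI[of _ u'])
         (use h su in \<open>simp del: split_paired_Ex, blast\<close>)
  next
    case False
    then have "lev u = 1" using arc_lev[OF su(1)] Cons.prems(2) by auto
    then show ?thesis using su Cons.prems(2)
      by (intro exI[of _ "[]"] exI[of _ a] exI[of _ x] exI[of _ s] exI[of _ u]) auto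
  qed
qed

abbreviation "M \<equiv> Mset iv \<kappa> \<delta>1 q01 F1 \<delta>2 q02 F2"
abbreviation "R \<equiv> Rset iv \<kappa> \<delta>1 q01 F1 \<delta>2 q02 F2"
abbreviation "B \<equiv> Bmu iv \<delta>1 \<delta>2"
abbreviation "H \<equiv> hairpin iv \<kappa> L1 L2"

lemma sound: "\<mu> \<in> M \<Longrightarrow> Cat iv (R \<mu>) (B \<mu>) \<subseteq> H"
proof
  fix h assume \<mu>: "\<mu> \<in> M" and h: "h \<in> Cat iv (R \<mu>) (B \<mu>)"
  obtain I F where \<mu>IF: "\<mu> = (I, F)" by (cases \<mu>)
  from h obtain u w where uw: "u \<in> R \<mu>" "w \<in> B \<mu>" "h = u @ w @ wbar iv u"
    unfolding Cat_def by auto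
  have IF: "init_state iv \<kappa> \<delta>1 q01 \<delta>2 q02 I" "final_state iv \<kappa> \<delta>1 q01 \<delta>2 q02 F"
    using \<mu> unfolding \<mu>IF Mset_def by auto
  obtain r1 r2 where I: "I = ((q01, q02), r1, r2, 0)"
    using IF(1) unfolding init_state_def by (cases I) auto
  obtain d1 d2 e1 e2 where F: "F = ((d1, d2), e1, e2, \<kappa>)"
    using IF(2) unfolding final_state_def by (cases F) auto
  have path: "apath E I u F" using uw(1) unfolding \<mu>IF Rset_def by simp
  have wB: "run \<delta>1 d1 w = e1" "run \<delta>2 d2 (wbar iv w) = e2"
    using uw(2) unfolding \<mu>IF F Bmu_def Bset_def by auto
  from path_split[OF path] obtain x0 a v s' u' where
    sp: "u = x0 @ a # v" "apath E I x0 s'" "lev s' = 0" "E s' a u'" "lev u' = 1" "apath E u' v F"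
    using kpos unfolding I F lev_def by auto
  have "lev F = lev u' + length v" using path_lev_pos[OF sp(6)] sp(5) by simp
  then have lenv: "length (a # v) = \<kappa>" using sp(5) unfolding F lev_def by simp
  obtain p1' p2' r1' r2' where s': "s' = ((p1', p2'), r1', r2', 0)"
    using sp(3) unfolding lev_def by (cases s') auto
  have Fc: "r1' \<in> F1 \<or> r2' \<in> F2" using arc_lev[OF sp(4)] sp(3,5) unfolding s' by auto
  have p2: "apath E s' (a # v) F" using sp(4,6) by (simp del: split_paired_Ex) blast
  have sem2: "run \<delta>1 p1' (a # v) = d1 \<and> run \<delta>2 p2' (a # v) = d2 \<and> r1' = run \<delta>1 e1 (wbar iv (a # v)) \<and> r2' = run \<delta>2 e2 (wbar iv (a # v))"
    by (rule path_sem[OF p2 s' F])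
  have sem1: "run \<delta>1 q01 x0 = p1' \<and> run \<delta>2 q02 x0 = p2'"
    using path_sem[OF sp(2) I s'] by simp
  define \<alpha> where "\<alpha> = a # v"
  have hh: "h = x0 @ \<alpha> @ w @ wbar iv \<alpha> @ wbar iv x0"
    unfolding uw(3) sp(1) \<alpha>_def by simp
  have r1: "run \<delta>1 q01 (x0 @ \<alpha> @ w @ wbar iv \<alpha>) = r1'"
    using sem1 sem2 wB unfolding \<alpha>_def by (simp del: wbar_Cons)
  have r2: "run \<delta>2 q02 (x0 @ \<alpha> @ wbar iv w @ wbar iv \<alpha>) = r2'"
    using sem1 sem2 wB unfolding \<alpha>_def by (simp del: wbar_Cons)
  have "x0 @ \<alpha> @ w @ wbar iv \<alpha> \<in> L1 \<or> \<alpha> @ w @ wbar iv \<alpha> @ wbar iv x0 \<in> L2"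
  proof (cases "r1' \<in> F1")
    case True then show ?thesis using r1 unfolding L1_def dfa_lang_def by simp
  next
    case False
    then have "r2' \<in> F2" using Fc by simp
    then have "x0 @ \<alpha> @ wbar iv w @ wbar iv \<alpha> \<in> wbar iv ` L2"
      unfolding L2_def dfa_lang_def using r2 by simp
    then obtain y where y: "y \<in> L2" "wbar iv y = x0 @ \<alpha> @ wbar iv w @ wbar iv \<alpha>" by auto
    have "y = wbar iv (wbar iv y)" by simp
    also have "\<dots> = \<alpha> @ w @ wbar iv \<alpha> @ wbar iv x0" unfolding y(2) by simp
    finally show ?thesis using y(1) by simp
  qed
  then show "h \<in> H" unfolding hairpin_def hh using lenv unfolding \<alpha>_def[symmetric]
    by blast
qed

lemma complete: "H \<subseteq> (\<Union>\<mu>\<in>M. Cat iv (R \<mu>) (B \<mu>))"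
proof
  fix h assume hH: "h \<in> H"
  define P where "P j \<longleftrightarrow> (\<exists>\<gamma> \<alpha> \<beta>. length \<gamma> = j \<and> \<kappa> \<le> length \<alpha> \<and> h = \<gamma> @ \<alpha> @ \<beta> @ wbar iv \<alpha> @ wbar iv \<gamma> \<and>
      (\<gamma> @ \<alpha> @ \<beta> @ wbar iv \<alpha> \<in> L1 \<or> \<alpha> @ \<beta> @ wbar iv \<alpha> @ wbar iv \<gamma> \<in> L2))" for j
  have exP: "\<exists>j. P j" using hH unfolding hairpin_def P_def by blast
  define g where "g = (LEAST j. P j)"
  have Pg: "P g" unfolding g_def using exP by (rule LeastI_ex)
  have minP: "\<not> P j" if "j < g" for j using not_less_Least[of j P] that unfolding g_def by blast
  from Pg obtain \<gamma> \<alpha> \<beta> where gab: "length \<gamma> = g" "\<kappa> \<le> length \<alpha>" "h = \<gamma> @ \<alpha> @ \<beta> @ wbar iv \<alpha> @ wbar iv \<gamma>"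
    "\<gamma> @ \<alpha> @ \<beta> @ wbar iv \<alpha> \<in> L1 \<or> \<alpha> @ \<beta> @ wbar iv \<alpha> @ wbar iv \<gamma> \<in> L2"
    unfolding P_def by blast
  define \<alpha>1 where "\<alpha>1 = take \<kappa> \<alpha>"
  define \<alpha>2 where "\<alpha>2 = drop \<kappa> \<alpha>"
  have a12: "\<alpha> = \<alpha>1 @ \<alpha>2" "length \<alpha>1 = \<kappa>" unfolding \<alpha>1_def \<alpha>2_def using gab(2) by auto
  define u where "u = \<gamma> @ \<alpha>1"
  define w where "w = \<alpha>2 @ \<beta> @ wbar iv \<alpha>2"
  have hu: "h = u @ w @ wbar iv u" unfolding u_def w_def gab(3) a12 by simp
  have good: "u @ w @ wbar iv \<alpha>1 \<in> L1 \<or> \<alpha>1 @ w @ wbar iv \<alpha>1 @ wbar iv \<gamma> \<in> L2"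
    using gab(4) unfolding u_def w_def a12 by simp
  define k where "k = length u"
  have k: "k = g + \<kappa>" unfolding k_def u_def using gab(1) a12 by simp
  define e1 where "e1 = run \<delta>1 q01 (u @ w)"
  define e2 where "e2 = run \<delta>2 q02 (u @ wbar iv w)"
  define lv where "lv j = (if j \<le> g then 0 else j - g)" for j
  define S where "S j = ((run \<delta>1 q01 (take j u), run \<delta>2 q02 (take j u)),
      run \<delta>1 e1 (wbar iv (drop j u)), run \<delta>2 e2 (wbar iv (drop j u)), lv j)" for j
  have St: "St (S j)" if "j \<le> k" for j
  proof -
    let ?z = "drop j u @ w @ wbar iv (drop j u)"
    have "run \<delta>1 (run \<delta>1 q01 (take j u)) ?z = run \<delta>1 e1 (wbar iv (drop j u))"
      unfolding e1_def by (simp flip: run_append)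
    moreover have "run \<delta>2 (run \<delta>2 q02 (take j u)) (wbar iv ?z) = run \<delta>2 e2 (wbar iv (drop j u))"
      unfolding e2_def by (simp flip: run_append)
    moreover have "lv j \<le> \<kappa>" unfolding lv_def using that k by auto
    ultimately show ?thesis unfolding S_def is_state_def Q12_def Bset_def by blast
  qed
  have notF: "run \<delta>1 e1 (wbar iv (drop j u)) \<notin> F1 \<and> run \<delta>2 e2 (wbar iv (drop j u)) \<notin> F2" if "j < g" for j
  proof -
    have len: "\<kappa> \<le> length (drop j u)" using that k unfolding k_def by simp
    have hj: "h = take j u @ drop j u @ w @ wbar iv (drop j u) @ wbar iv (take j u)"
    proof -
      have "wbar iv u = wbar iv (drop j u) @ wbar iv (take j u)"
        using wbar_append[of iv "take j u" "drop j u"] by (simp del: wbar_append)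
      then show ?thesis unfolding hu by simp
    qed
    have lt: "length (take j u) = j" using that k unfolding k_def by simp
    show ?thesis
    proof (intro conjI notI)
      assume "run \<delta>1 e1 (wbar iv (drop j u)) \<in> F1"
      then have "take j u @ drop j u @ w @ wbar iv (drop j u) \<in> L1"
        unfolding L1_def dfa_lang_def e1_def by (simp flip: run_append)
      then have "P j" unfolding P_def using len hj lt by blast
      then show False using minP[OF that] by simp
    next
      assume "run \<delta>2 e2 (wbar iv (drop j u)) \<in> F2"
      then have "take j u @ drop j u @ wbar iv w @ wbar iv (drop j u) \<in> wbar iv ` L2"
        unfolding L2_def dfa_lang_def e2_def by (simp flip: run_append)
      then obtain y where y: "y \<in> L2" "wbar iv y = take j u @ drop j u @ wbar iv w @ wbar iv (drop j u)" by auto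
      have "y = wbar iv (wbar iv y)" by simp
      also have "\<dots> = drop j u @ w @ wbar iv (drop j u) @ wbar iv (take j u)" unfolding y(2) by (simp del: take_drop_app)
      finally have "P j" unfolding P_def using len hj lt y(1) by blast
      then show False using minP[OF that] by simp
    qed
  qed
  have isF: "run \<delta>1 e1 (wbar iv (drop g u)) \<in> F1 \<or> run \<delta>2 e2 (wbar iv (drop g u)) \<in> F2"
  proof -
    have dg: "drop g u = \<alpha>1" unfolding u_def using gab(1) by simp
    show ?thesis
    proof (cases "u @ w @ wbar iv \<alpha>1 \<in> L1")
      case True
      then show ?thesis unfolding dg L1_def dfa_lang_def e1_def by simp
    next
      case False
      then have "\<alpha>1 @ w @ wbar iv \<alpha>1 @ wbar iv \<gamma> \<in> L2" using good by simp
      then have "wbar iv (\<alpha>1 @ w @ wbar iv \<alpha>1 @ wbar iv \<gamma>) \<in> dfa_lang \<delta>2 q02 F2"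
        unfolding L2_def[symmetric] by blast
      then have "run \<delta>2 q02 (u @ wbar iv w @ wbar iv \<alpha>1) \<in> F2"
        unfolding dfa_lang_def u_def by simp
      then show ?thesis unfolding dg e2_def by simp
    qed
  qed
  have arcs: "E (S j) (u ! j) (S (Suc j))" if "j < length u" for j
  proof -
    have jk: "j < k" using that k_def by simp
    have dj: "drop j u = u ! j # drop (Suc j) u" using that by (rule Cons_nth_drop_Suc[symmetric])
    have tj: "take (Suc j) u = take j u @ [u ! j]" using that by (rule take_Suc_conv_app_nth)
    have e0: "wbar iv (drop j u) = wbar iv (drop (Suc j) u) @ [iv (u ! j)]"
      by (subst dj) simp
    let ?q1 = "run \<delta>1 e1 (wbar iv (drop (Suc j) u))"
    let ?q2 = "run \<delta>2 e2 (wbar iv (drop (Suc j) u))"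
    have Sj: "S j = ((run \<delta>1 q01 (take j u), run \<delta>2 q02 (take j u)), \<delta>1 ?q1 (iv (u ! j)), \<delta>2 ?q2 (iv (u ! j)), lv j)"
      unfolding S_def by (simp add: e0)
    have SSj: "S (Suc j) = ((\<delta>1 (run \<delta>1 q01 (take j u)) (u ! j), \<delta>2 (run \<delta>2 q02 (take j u)) (u ! j)), ?q1, ?q2, lv (Suc j))"
      unfolding S_def tj by simp
    have levc: "(lv j = 0 \<and> lv (Suc j) = 0 \<and> \<delta>1 ?q1 (iv (u ! j)) \<notin> F1 \<and> \<delta>2 ?q2 (iv (u ! j)) \<notin> F2) \<or>
         (lv j = 0 \<and> lv (Suc j) = 1 \<and> (\<delta>1 ?q1 (iv (u ! j)) \<in> F1 \<or> \<delta>2 ?q2 (iv (u ! j)) \<in> F2)) \<or>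
         (1 \<le> lv j \<and> lv j < \<kappa> \<and> lv (Suc j) = lv j + 1)"
    proof -
      have e: "\<delta>1 ?q1 (iv (u ! j)) = run \<delta>1 e1 (wbar iv (drop j u))"
              "\<delta>2 ?q2 (iv (u ! j)) = run \<delta>2 e2 (wbar iv (drop j u))"
        by (simp_all add: e0)
      consider "j < g" | "j = g" | "g < j" by linarith
      then show ?thesis
      proof cases
        case 1 then show ?thesis using notF[OF 1] unfolding e lv_def by auto
      next
        case 2 then show ?thesis using isF unfolding e lv_def by auto
      next
        case 3 then show ?thesis using jk k unfolding lv_def by auto
      qed
    qed
    show ?thesis unfolding arc_def
      using Sj SSj St[of j] St[of "Suc j"] jk levc by auto
  qed
  have path: "apath E (S 0) u (S (length u))" by (rule path_build) (rule arcs)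
  have S0: "init_state iv \<kappa> \<delta>1 q01 \<delta>2 q02 (S 0)"
    unfolding init_state_def using St[of 0] unfolding S_def lv_def by simp
  have Sk: "S k = ((run \<delta>1 q01 u, run \<delta>2 q02 u), e1, e2, \<kappa>)"
    unfolding S_def lv_def k_def using k kpos unfolding k_def by auto
  have Skf: "final_state iv \<kappa> \<delta>1 q01 \<delta>2 q02 (S k)"
    unfolding final_state_def using St[of k] Sk by simp
  have pathk: "apath E (S 0) u (S k)" using path k_def by simp
  have \<mu>M: "(S 0, S k) \<in> M" unfolding Mset_def using S0 Skf pathk by blast
  have uR: "u \<in> R (S 0, S k)" unfolding Rset_def using pathk by simp
  have wB: "w \<in> B (S 0, S k)" unfolding Bmu_def Sk Bset_def e1_def e2_def by simp
  show "h \<in> (\<Union>\<mu>\<in>M. Cat iv (R \<mu>) (B \<mu>))"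
    using \<mu>M uR wB hu unfolding Cat_def by blast
qed

lemma finM: "finite M"
proof -
  let ?X = "(UNIV :: ('s1 \<times> 's2) set) \<times> (UNIV :: 's1 set) \<times> (UNIV :: 's2 set) \<times> {..\<kappa>}"
  have "M \<subseteq> ?X \<times> ?X"
    unfolding Mset_def init_state_def final_state_def is_state_def by auto
  moreover have "finite (?X \<times> ?X)" by simp
  ultimately show ?thesis by (rule finite_subset)
qed

lemma H_eq: "H = (\<Union>\<mu>\<in>M. Cat iv (R \<mu>) (B \<mu>))"
  using sound complete by blast

lemma main:
  "growth H =
     max (Max (insert 0 ((\<lambda>\<mu>. growth (B \<mu>)) ` M)))
         (sqrt (Max (insert 0 ((\<lambda>\<mu>. growth (R \<mu>)) ` M))))"
proof -
  define \<sigma> where "\<sigma> = Max (insert 0 ((\<lambda>\<mu>. growth (B \<mu>)) ` M))"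
  define \<rho> where "\<rho> = Max (insert 0 ((\<lambda>\<mu>. growth (R \<mu>)) ` M))"
  define \<eta> where "\<eta> = growth H"
  have fin1: "finite (insert 0 ((\<lambda>\<mu>. growth (B \<mu>)) ` M))" using finM by simp
  have fin2: "finite (insert 0 ((\<lambda>\<mu>. growth (R \<mu>)) ` M))" using finM by simp
  have \<sigma>0: "\<sigma> \<ge> 0" and \<sigma>ge: "\<And>\<mu>. \<mu> \<in> M \<Longrightarrow> growth (B \<mu>) \<le> \<sigma>"
    unfolding \<sigma>_def using Max_ge[OF fin1] by auto
  have \<rho>0: "\<rho> \<ge> 0" and \<rho>ge: "\<And>\<mu>. \<mu> \<in> M \<Longrightarrow> growth (R \<mu>) \<le> \<rho>"
    unfolding \<rho>_def using Max_ge[OF fin2] by auto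
  have \<eta>0: "\<eta> \<ge> 0" unfolding \<eta>_def by (rule growth_ge0)
  have sub: "\<And>\<mu>. \<mu> \<in> M \<Longrightarrow> growth (Cat iv (R \<mu>) (B \<mu>)) \<le> \<eta>"
    unfolding \<eta>_def H_eq by (rule growth_mono) blast
  have up: "\<eta> \<le> max \<sigma> (sqrt \<rho>)"
    unfolding \<eta>_def H_eq
  proof (rule growth_UN[OF finM])
    show "0 \<le> max \<sigma> (sqrt \<rho>)" using \<sigma>0 by simp
    fix \<mu> assume \<mu>: "\<mu> \<in> M"
    have "growth (Cat iv (R \<mu>) (B \<mu>)) \<le> max (growth (B \<mu>)) (sqrt (growth (R \<mu>)))"
      by (rule growth_Cat_le)
    also have "\<dots> \<le> max \<sigma> (sqrt \<rho>)"
      using \<sigma>ge[OF \<mu>] \<rho>ge[OF \<mu>] by (intro max.mono real_sqrt_le_mono) auto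
    finally show "growth (Cat iv (R \<mu>) (B \<mu>)) \<le> max \<sigma> (sqrt \<rho>)" .
  qed
  have low1: "\<sigma> \<le> \<eta>"
    unfolding \<sigma>_def
  proof (rule Max.boundedI[OF fin1])
    show "insert 0 ((\<lambda>\<mu>. growth (B \<mu>)) ` M) \<noteq> {}" by simp
    fix x assume "x \<in> insert 0 ((\<lambda>\<mu>. growth (B \<mu>)) ` M)"
    then consider "x = 0" | \<mu> where "\<mu> \<in> M" "x = growth (B \<mu>)" by auto
    then show "x \<le> \<eta>"
    proof cases
      case 1 then show ?thesis using \<eta>0 by simp
    next
      case 2
      obtain I F where \<mu>IF: "\<mu> = (I, F)" by (cases \<mu>)
      from 2(1) obtain I' v where I': "init_state iv \<kappa> \<delta>1 q01 \<delta>2 q02 I'" "apath E I' v F"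
        unfolding \<mu>IF Mset_def by blast
      have M': "(I', F) \<in> M" using 2(1) I' unfolding \<mu>IF Mset_def by blast
      have vR: "v \<in> R (I', F)" unfolding Rset_def using I' by simp
      have BB: "B (I', F) = B \<mu>" unfolding \<mu>IF Bmu_def by simp
      have "growth (B (I', F)) \<le> growth (Cat iv (R (I', F)) (B (I', F)))"
        by (rule growth_Cat_B[OF vR])
      also have "\<dots> \<le> \<eta>" by (rule sub[OF M'])
      finally show ?thesis using 2(2) BB by simp
    qed
  qed
  have "\<rho> \<le> \<eta> ^ 2"
    unfolding \<rho>_def
  proof (rule Max.boundedI[OF fin2])
    show "insert 0 ((\<lambda>\<mu>. growth (R \<mu>)) ` M) \<noteq> {}" by simp
    fix x assume "x \<in> insert 0 ((\<lambda>\<mu>. growth (R \<mu>)) ` M)"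
    then consider "x = 0" | \<mu> where "\<mu> \<in> M" "x = growth (R \<mu>)" by auto
    then show "x \<le> \<eta> ^ 2"
    proof cases
      case 1 then show ?thesis by simp
    next
      case 2
      obtain I F where \<mu>IF: "\<mu> = (I, F)" by (cases \<mu>)
      have Ff: "final_state iv \<kappa> \<delta>1 q01 \<delta>2 q02 F" using 2(1) unfolding \<mu>IF Mset_def by blast
      obtain d1 d2 e1 e2 l where F: "F = ((d1, d2), e1, e2, l)" by (cases F) auto
      have "Bset iv \<delta>1 \<delta>2 d1 d2 e1 e2 \<noteq> {}" using Ff unfolding F final_state_def is_state_def by simp
      then obtain w0 where w0: "w0 \<in> B \<mu>" unfolding \<mu>IF F Bmu_def by auto
      have "sqrt (growth (R \<mu>)) \<le> growth (Cat iv (R \<mu>) (B \<mu>))" by (rule growth_Cat_A[OF w0])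
      also have "\<dots> \<le> \<eta>" by (rule sub[OF 2(1)])
      finally have "(sqrt (growth (R \<mu>)))^2 \<le> \<eta>^2" using growth_ge0[of "R \<mu>"] by (intro power_mono) auto
      then show ?thesis using 2(2) growth_ge0[of "R \<mu>"] by simp
    qed
  qed
  then have low2: "sqrt \<rho> \<le> \<eta>" using \<eta>0 by (metis real_sqrt_le_mono real_sqrt_abs abs_of_nonneg)
  have "\<eta> = max \<sigma> (sqrt \<rho>)" using up low1 low2 by simp
  then show ?thesis unfolding \<eta>_def \<sigma>_def \<rho>_def .
qed

end


theorem lemma13:
  fixes iv :: "'a::finite \<Rightarrow> 'a"
    and \<kappa> :: nat
    and \<delta>1 :: "'s1::finite \<Rightarrow> 'a \<Rightarrow> 's1" and q01 :: 's1 and F1 :: "'s1 set"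
    and \<delta>2 :: "'s2::finite \<Rightarrow> 'a \<Rightarrow> 's2" and q02 :: 's2 and F2 :: "'s2 set"
    and L1 L2 :: "'a list set"
  assumes alph: "card (UNIV :: 'a set) \<ge> 2"
    and invol: "\<And>a. iv (iv a) = a"
    and kpos: "\<kappa> > 0"
    and L1_def: "L1 = dfa_lang \<delta>1 q01 F1"
    and L2_def: "wbar iv ` L2 = dfa_lang \<delta>2 q02 F2"
    and L1_sub: "\<forall>w\<in>L1. \<exists>\<alpha> x y. length \<alpha> = \<kappa> \<and> w = x @ \<alpha> @ y @ wbar iv \<alpha>"
    and L2_sub: "\<forall>w\<in>L2. \<exists>\<alpha> x y. length \<alpha> = \<kappa> \<and> w = \<alpha> @ x @ wbar iv \<alpha> @ y"
  shows "growth (hairpin iv \<kappa> L1 L2) =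
     max (Max (insert 0 ((\<lambda>\<mu>. growth (Bmu iv \<delta>1 \<delta>2 \<mu>)) ` Mset iv \<kappa> \<delta>1 q01 F1 \<delta>2 q02 F2)))
         (sqrt (Max (insert 0 ((\<lambda>\<mu>. growth (Rset iv \<kappa> \<delta>1 q01 F1 \<delta>2 q02 F2 \<mu>)) ` Mset iv \<kappa> \<delta>1 q01 F1 \<delta>2 q02 F2))))"
  proof -
  interpret hp iv \<kappa> \<delta>1 q01 F1 \<delta>2 q02 F2 L1 L2
    using invol kpos L1_def L2_def by unfold_locales auto
  show ?thesis by (rule main)
qed

end
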